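(* Let $\mathfrak n=\mathfrak v\oplus\mathfrak z$ be a Lie algebra of Heisenberg type with $\mathfrak z=\mathbb R^m$. Then every Lagrangian subspace $\mathcal L\subset\mathfrak v$ is a $C^+(m)$-submodule of $\mathfrak v$, i.e. $J_zJ_w(\mathcal L)\subset\mathcal L$ for all $z,w\in\mathfrak z$.
   Context: Lie algebra of Heisenberg type: $\mathfrak z=\mathbb R^m$ with standard inner product $\langle\cdot,\cdot\rangle$; $\mathfrak v$ is a finite-dimensional real module over the Clifford algebra $C(m)$ (relations $z^2=-\langle z,z\rangle 1$) with an inner product $(\cdot,\cdot)$ for which each $J_z$ is skew-symmetric; $\mathfrak z$ is central and $\langle z,[u,v]\rangle=(J_zu,v)$ for $u,v\in\mathfrak v$. $C^+(m)$ is the even Clifford subalgebra, generated by products $zw$ of two elements of $\mathbb R^m$. A Lagrangian subspace is a subspace $\mathcal L\subset\mathfrak v$ with $[\mathcal L,\mathcal L]=0$ and $\dim\mathcal L=\frac12\dim\mathfrak v$. *)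

theory Defs
  imports "HOL-Analysis.Analysis"
begin

text \<open>Lie algebra of Heisenberg type n = v + z with z = R^m (type real^'m, standard inner
product) and v a finite-dimensional real inner product space (type 'v :: euclidean_space).
J z is the Clifford action of z on v.\<close>

definition heisenberg_type :: "(real^'m \<Rightarrow> 'v::euclidean_space \<Rightarrow> 'v) \<Rightarrow> bool" where
  "heisenberg_type J \<longleftrightarrow>
     (\<forall>u. linear (\<lambda>z. J z u)) \<and>
     (\<forall>z. linear (J z)) \<and>
     (\<forall>z u. J z (J z u) = - (z \<bullet> z) *\<^sub>R u) \<and>
     (\<forall>z u w. (J z u) \<bullet> w = - (u \<bullet> J z w))"

text \<open>The bracket [u,w] \<in> z, characterised by <z,[u,w]> = (J z u, w).\<close>
definition lie_br :: "(real^'m \<Rightarrow> 'v::euclidean_space \<Rightarrow> 'v) \<Rightarrow> 'v \<Rightarrow> 'v \<Rightarrow> real^'m" where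
  "lie_br J u w = (\<Sum>b\<in>Basis. ((J b u) \<bullet> w) *\<^sub>R b)"

definition lagrangian :: "(real^'m \<Rightarrow> 'v::euclidean_space \<Rightarrow> 'v) \<Rightarrow> 'v set \<Rightarrow> bool" where
  "lagrangian J L \<longleftrightarrow> subspace L \<and> (\<forall>u\<in>L. \<forall>w\<in>L. lie_br J u w = 0)
     \<and> 2 * dim L = DIM('v)"

end

theory Submission
  imports Defs
begin

theorem corollary4p2:
  fixes J :: "real^'m \<Rightarrow> 'v::euclidean_space \<Rightarrow> 'v" and L :: "'v set"
  assumes "heisenberg_type J"
    and "lagrangian J L"
  shows "\<forall>z w. \<forall>u\<in>L. J z (J w u) \<in> L"
proof -
  have linz: "\<And>u. linear (\<lambda>z. J z u)" and linJ: "\<And>z. linear (J z)"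
    and sq: "\<And>z u. J z (J z u) = - (z \<bullet> z) *\<^sub>R u"
    and skew: "\<And>z u w. (J z u) \<bullet> w = - (u \<bullet> J z w)"
    using assms(1) unfolding heisenberg_type_def by auto
  have subL: "subspace L" and br: "\<And>u w. u \<in> L \<Longrightarrow> w \<in> L \<Longrightarrow> lie_br J u w = 0"
    and dimL: "2 * dim L = DIM('v)"
    using assms(2) unfolding lagrangian_def by auto
  have basis0: "(J b u) \<bullet> w = 0" if "u \<in> L" "w \<in> L" "b \<in> Basis" for u w b
  proof -
    have "lie_br J u w \<bullet> b = (\<Sum>b'\<in>Basis. ((J b' u) \<bullet> w) * (b' \<bullet> b))"
      unfolding lie_br_def by (simp add: inner_sum_left)
    also have "\<dots> = (J b u) \<bullet> w"
      using that(3) by (simp add: inner_Basis if_distrib[where f="\<lambda>x. _ * x"] cong: if_cong)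
    finally show ?thesis using br[OF that(1,2)] by simp
  qed
  have orth: "(J z u) \<bullet> w = 0" if "u \<in> L" "w \<in> L" for u w z
  proof -
    have l1: "linear (\<lambda>z. (J z u) \<bullet> w)"
      using linear_compose[OF linz[of u] bounded_linear.linear[OF bounded_linear_inner_left[of w]]]
      by (simp add: o_def)
    have "(\<lambda>z. (J z u) \<bullet> w) = (\<lambda>z. 0)"
      by (rule linear_eq_stdbasis[OF l1 linear_zero]) (simp add: basis0[OF that])
    then show ?thesis by metis
  qed
  define C where "C = {y. \<forall>x\<in>L. orthogonal x y}"
  have subC: "subspace C" unfolding C_def by (rule subspace_orthogonal_to_vectors)
  have "dim {y \<in> UNIV. \<forall>x\<in>L. orthogonal x y} + dim L = dim (UNIV :: 'v set)"
    by (rule dim_subspace_orthogonal_to_vectors[OF subL subspace_UNIV]) simp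
  then have dimC: "dim C = dim L" using dimL unfolding C_def by simp
  have JLC: "J z ` L \<subseteq> C" for z
    unfolding C_def orthogonal_def using orth by (auto simp: inner_commute)
  have img: "J z ` L = C" if "z \<noteq> 0" for z
  proof (rule subspace_dim_equal)
    show "subspace (J z ` L)" using linJ subL by (rule linear_subspace_image)
    show "subspace C" by (rule subC)
    show "J z ` L \<subseteq> C" by (rule JLC)
    have inj: "inj_on (J z) (span L)"
    proof (subst linear_inj_on_iff_eq_0[OF linJ subspace_span], intro ballI impI)
      fix x assume "J z x = 0"
      then have "J z (J z x) = 0" using linear_0[OF linJ] by simp
      then show "x = 0" using sq[of z x] that by simp
    qed
    show "dim C \<le> dim (J z ` L)"
      using dim_image_eq[OF linJ inj] dimC by simp
  qed
  show ?thesis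
  proof (intro allI ballI)
    fix z w u assume u: "u \<in> L"
    show "J z (J w u) \<in> L"
    proof (cases "z = 0")
      case True
      have "J 0 (J w u) = 0" using linear_0[OF linz] by simp
      then show ?thesis using True subspace_0[OF subL] by simp
    next
      case False
      have "J w u \<in> C" using JLC u by auto
      then obtain l where l: "l \<in> L" "J w u = J z l" using img[OF False] by blast
      have "J z (J w u) = - (z \<bullet> z) *\<^sub>R l" using l sq by simp
      then show ?thesis using subspace_scale[OF subL l(1), of "- (z \<bullet> z)"] by simp
    qed
  qed
qed

end
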